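(* Suppose $\mathbf{v}_1(0),\dots,\mathbf{v}_m(0)$ are initialized i.i.d. from $N(0,\alpha^2\mathbf{I}_d)$. Then with probability at least $1-\delta$, $$\max_{k\in[m]}\frac{1}{\|\mathbf{v}_k(0)\|_2}\le\frac{(m/\delta)^{1/d}}{\alpha}.$$ Moreover, with probability at least $1-\delta$, for all $t\ge0$ of weight-normalized training, $\max_{k\in[m]}\frac{1}{\|\mathbf{v}_k(t)\|_2}\le\frac{(m/\delta)^{1/d}}{\alpha}$.
   Context: Weight-normalized network $f(\mathbf{x})=\frac{1}{\sqrt m}\sum_kc_k\sigma(g_k\mathbf{v}_k^\top\mathbf{x}/\|\mathbf{v}_k\|_2)$ with input dimension $d$, $\sigma(s)=\max\{s,0\}$, trained by gradient descent (or gradient flow) on the square loss in $\mathbf{v}_k,g_k$; $\mathbf{v}_k(t)$ is the parameter at iteration/time $t$. Since $\partial L/\partial\mathbf{v}_k$ is orthogonal to $\mathbf{v}_k$, along such training $\|\mathbf{v}_k(t)\|_2\ge\|\mathbf{v}_k(0)\|_2$. *)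

theory Defs
  imports "HOL-Probability.Probability"
begin

definition vnorm :: "nat \<Rightarrow> (nat \<Rightarrow> real) \<Rightarrow> real" where
  "vnorm d v = sqrt (\<Sum>i<d. (v i)\<^sup>2)"

text \<open>The Gaussian N(0, alpha^2 I_d) on R^d: product of d independent
  one-dimensional normals with mean 0 and standard deviation alpha.\<close>
definition gauss_vec :: "nat \<Rightarrow> real \<Rightarrow> (nat \<Rightarrow> real) measure" where
  "gauss_vec d \<alpha> = PiM {..<d} (\<lambda>_. density lborel (normal_density 0 \<alpha>))"

text \<open>Joint law of m i.i.d. initial vectors v_1(0),...,v_m(0) (indexed 0..m-1).\<close>
definition init_law :: "nat \<Rightarrow> nat \<Rightarrow> real \<Rightarrow> (nat \<Rightarrow> nat \<Rightarrow> real) measure" where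
  "init_law m d \<alpha> = PiM {..<m} (\<lambda>_. gauss_vec d \<alpha>)"

end

theory Submission
  imports Defs
begin

lemma normal_small:
  fixes a r :: real assumes "a > 0" "r > 0"
  shows "emeasure (density lborel (normal_density 0 a)) {-r<..<r} \<le> ennreal (r / a)"
proof -
  have b: "normal_density 0 a x \<le> 1 / sqrt (2 * pi * a\<^sup>2)" for x
    unfolding normal_density_def using assms by (auto intro!: mult_left_le simp: divide_simps)
  have "emeasure (density lborel (normal_density 0 a)) {-r<..<r} = (\<integral>\<^sup>+ x. ennreal (normal_density 0 a x) * indicator {-r<..<r} x \<partial>lborel)"
    by (simp add: emeasure_density)
  also have "\<dots> \<le> (\<integral>\<^sup>+ x. ennreal (1 / sqrt (2 * pi * a\<^sup>2)) * indicator {-r<..<r} x \<partial>lborel)"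
    by (intro nn_integral_mono) (auto simp: b split: split_indicator)
  also have "\<dots> = ennreal (1 / sqrt (2 * pi * a\<^sup>2)) * ennreal (2*r)"
    using assms by (simp add: nn_integral_cmult)
  also have "\<dots> = ennreal (2*r / sqrt (2 * pi * a\<^sup>2))"
    using assms by (simp add: ennreal_mult'[symmetric])
  also have "\<dots> \<le> ennreal (r / a)"
  proof (intro ennreal_leI)
    have s: "sqrt (2 * pi * a\<^sup>2) = sqrt (2*pi) * a" using assms by (simp add: real_sqrt_mult)
    have "2 \<le> sqrt (2*pi)" using pi_gt3 by (simp add: real_le_rsqrt)
    then show "2*r / sqrt (2 * pi * a\<^sup>2) \<le> r / a" unfolding s using assms
      by (simp add: divide_simps)
  qed
  finally show ?thesis .
qed

lemma pps: "prob_space M \<Longrightarrow> product_prob_space (\<lambda>_. M)"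
  unfolding product_prob_space_def product_prob_space_axioms_def product_sigma_finite_def
  by (auto simp: prob_space_imp_sigma_finite)

lemma gauss_small:
  fixes a r :: real assumes "a > 0" "r > 0"
  shows "emeasure (gauss_vec d a) (PiE {..<d} (\<lambda>_. {-r<..<r})) \<le> ennreal ((r / a) ^ d)"
proof -
  let ?N = "density lborel (normal_density 0 a)"
  interpret product_prob_space "\<lambda>_. ?N" "{..<d}"
    by (rule pps[OF prob_space_normal_density]) (rule assms(1))
  have "emeasure (gauss_vec d a) (PiE {..<d} (\<lambda>_. {-r<..<r})) = (\<Prod>i<d. emeasure ?N {-r<..<r})"
    unfolding gauss_vec_def by (rule emeasure_PiM) auto
  also have "\<dots> = emeasure ?N {-r<..<r} ^ d" by simp
  also have "\<dots> \<le> ennreal (r / a) ^ d"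
    by (intro power_mono normal_small assms) auto
  also have "\<dots> = ennreal ((r / a) ^ d)" using assms by (simp add: ennreal_power)
  finally show ?thesis .
qed

lemma gauss_prob: "a > 0 \<Longrightarrow> prob_space (gauss_vec d a)"
  unfolding gauss_vec_def by (intro prob_space_PiM prob_space_normal_density)

lemma init_small:
  fixes a r :: real and d k m :: nat assumes "a > 0" "r > 0" "k < m"
  defines "B \<equiv> PiE {..<m} (\<lambda>j. if j = k then PiE {..<d} (\<lambda>_. {-r<..<r}) else space (gauss_vec d a))"
  shows "B \<in> sets (init_law m d a)" "measure (init_law m d a) B \<le> (r / a) ^ d"
proof -
  let ?G = "gauss_vec d a"
  interpret product_prob_space "\<lambda>_. ?G" "{..<m}"
    by (rule pps[OF gauss_prob[OF assms(1)]])
  have setsG: "PiE {..<d} (\<lambda>_. {-r<..<r}) \<in> sets ?G"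
    unfolding gauss_vec_def by (intro sets_PiM_I_finite) auto
  show "B \<in> sets (init_law m d a)"
    unfolding B_def init_law_def using setsG by (intro sets_PiM_I_finite) auto
  have "emeasure (init_law m d a) B = (\<Prod>j<m. emeasure ?G (if j = k then PiE {..<d} (\<lambda>_. {-r<..<r}) else space ?G))"
    unfolding init_law_def B_def by (rule emeasure_PiM) (auto simp: setsG)
  also have "\<dots> = emeasure ?G (PiE {..<d} (\<lambda>_. {-r<..<r}))"
  proof -
    have "(\<Prod>j<m. emeasure ?G (if j = k then PiE {..<d} (\<lambda>_. {-r<..<r}) else space ?G))
      = emeasure ?G (PiE {..<d} (\<lambda>_. {-r<..<r})) * (\<Prod>j\<in>{..<m}-{k}. emeasure ?G (if j = k then PiE {..<d} (\<lambda>_. {-r<..<r}) else space ?G))"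
      using assms(3) by (subst prod.remove[of _ k]) auto
    also have "(\<Prod>j\<in>{..<m}-{k}. emeasure ?G (if j = k then PiE {..<d} (\<lambda>_. {-r<..<r}) else space ?G)) = 1"
      by (intro prod.neutral) (auto simp: prob_space.emeasure_space_1[OF gauss_prob[OF assms(1)]])
    finally show ?thesis by simp
  qed
  also have "\<dots> \<le> ennreal ((r / a) ^ d)" by (rule gauss_small[OF assms(1,2)])
  finally show "measure (init_law m d a) B \<le> (r / a) ^ d"
    using assms by (simp add: measure_def enn2real_leI)
qed


lemma vnorm_ge: "i < d \<Longrightarrow> \<bar>v i\<bar> \<le> vnorm d v"
  unfolding vnorm_def
proof -
  assume "i < d"
  then have "(v i)\<^sup>2 \<le> (\<Sum>j<d. (v j)\<^sup>2)" by (intro member_le_sum) auto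
  then have "sqrt ((v i)\<^sup>2) \<le> sqrt (\<Sum>j<d. (v j)\<^sup>2)" by (rule real_sqrt_le_mono)
  then show "\<bar>v i\<bar> \<le> sqrt (\<Sum>j<d. (v j)\<^sup>2)" by simp
qed

theorem lemmaB10:
  fixes m d :: nat and \<alpha> \<delta> :: real
    and traj :: "(nat \<Rightarrow> nat \<Rightarrow> real) \<Rightarrow> real \<Rightarrow> nat \<Rightarrow> nat \<Rightarrow> real"
  assumes "m \<ge> 1" and "d \<ge> 1" and "\<alpha> > 0" and "0 < \<delta>" and "\<delta> < 1"
    and traj_init: "\<And>V k. traj V 0 k = V k"
    and traj_norm: "\<And>V t k. t \<ge> 0 \<Longrightarrow> k < m \<Longrightarrow> vnorm d (traj V t k) \<ge> vnorm d (traj V 0 k)"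
  shows "(\<exists>E \<in> sets (init_law m d \<alpha>).
            measure (init_law m d \<alpha>) E \<ge> 1 - \<delta> \<and>
            (\<forall>V \<in> E. (MAX k\<in>{..<m}. 1 / vnorm d (V k)) \<le> (real m / \<delta>) powr (1 / real d) / \<alpha>))
       \<and> (\<exists>E \<in> sets (init_law m d \<alpha>).
            measure (init_law m d \<alpha>) E \<ge> 1 - \<delta> \<and>
            (\<forall>V \<in> E. \<forall>t\<ge>0. (MAX k\<in>{..<m}. 1 / vnorm d (traj V t k)) \<le> (real m / \<delta>) powr (1 / real d) / \<alpha>))"
proof -
  define s where "s = (\<delta> / real m) powr (1 / real d)"
  define r where "r = \<alpha> * s"
  define L where "L = init_law m d \<alpha>"
  define G where "G = gauss_vec d \<alpha>"
  define B where "B = (\<lambda>k. PiE {..<m} (\<lambda>j. if j = k then PiE {..<d} (\<lambda>_. {-r<..<r}) else space G))"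
  define E where "E = space L - (\<Union>k<m. B k)"
  have mpos: "real m > 0" using assms(1) by simp
  have spos: "s > 0" unfolding s_def using assms mpos by simp
  have rpos: "r > 0" unfolding r_def using spos assms by simp
  have rs: "r / \<alpha> = s" unfolding r_def using assms by simp
  have sd: "s ^ d = \<delta> / real m"
  proof -
    have "s ^ d = s powr real d" using spos by (simp add: powr_realpow)
    also have "\<dots> = \<delta> / real m" unfolding s_def using assms mpos by (simp add: powr_powr)
    finally show ?thesis .
  qed
  have bound: "1 / r = (real m / \<delta>) powr (1 / real d) / \<alpha>"
    unfolding r_def s_def using assms mpos by (simp add: powr_divide divide_simps)
  interpret L: prob_space L unfolding L_def init_law_def
    by (intro prob_space_PiM gauss_prob assms(3))
  have Bsets: "k < m \<Longrightarrow> B k \<in> sets L" for k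
    unfolding B_def L_def G_def by (rule init_small(1)[OF assms(3) rpos])
  have Bmeas: "k < m \<Longrightarrow> measure L (B k) \<le> \<delta> / real m" for k
    unfolding B_def L_def G_def using init_small(2)[OF assms(3) rpos, of k m d] rs sd by simp
  have UB: "(\<Union>k<m. B k) \<in> sets L" using Bsets by auto
  have Esets: "E \<in> sets L" unfolding E_def using UB by auto
  have "measure L (\<Union>k<m. B k) \<le> (\<Sum>k<m. measure L (B k))"
    by (rule L.finite_measure_subadditive_finite) (auto simp: Bsets)
  also have "\<dots> \<le> (\<Sum>k<m. \<delta> / real m)" by (intro sum_mono Bmeas) auto
  also have "\<dots> = \<delta>" using mpos by simp
  finally have "measure L (\<Union>k<m. B k) \<le> \<delta>" .
  then have Emeas: "measure L E \<ge> 1 - \<delta>" unfolding E_def using L.prob_compl[OF UB] by simp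
  have Enorm: "V \<in> E \<Longrightarrow> k < m \<Longrightarrow> vnorm d (V k) \<ge> r" for V k
  proof -
    assume V: "V \<in> E" and k: "k < m"
    have Vsp: "V \<in> PiE {..<m} (\<lambda>_. PiE {..<d} (\<lambda>_. UNIV))" and VB: "V \<notin> B k"
      using V unfolding E_def L_def init_law_def gauss_vec_def using k by (auto simp: space_PiM)
    have Vk: "V k \<in> PiE {..<d} (\<lambda>_. UNIV)" using Vsp k by auto
    have "V k \<notin> PiE {..<d} (\<lambda>_. {-r<..<r})"
    proof
      assume "V k \<in> PiE {..<d} (\<lambda>_. {-r<..<r})"
      then have "V \<in> B k" using Vsp unfolding B_def G_def gauss_vec_def
        by (auto simp: space_PiM PiE_iff)
      then show False using VB by simp
    qed
    then obtain i where i: "i < d" "V k i \<notin> {-r<..<r}" using Vk by (auto simp: PiE_iff)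
    then have "r \<le> \<bar>V k i\<bar>" by auto
    also have "\<dots> \<le> vnorm d (V k)" by (rule vnorm_ge[OF i(1)])
    finally show ?thesis .
  qed
  have inv: "x \<ge> r \<Longrightarrow> 1 / x \<le> (real m / \<delta>) powr (1 / real d) / \<alpha>" for x
    unfolding bound[symmetric] using rpos by (simp add: frac_le)
  have mne: "{..<m} \<noteq> {}" using assms(1) by (auto simp: lessThan_empty_iff)
  show ?thesis
  proof (intro conjI bexI[of _ E])
    show "E \<in> sets (init_law m d \<alpha>)" using Esets L_def by simp
    show "E \<in> sets (init_law m d \<alpha>)" using Esets L_def by simp
    show "measure (init_law m d \<alpha>) E \<ge> 1 - \<delta>" using Emeas L_def by simp
    show "measure (init_law m d \<alpha>) E \<ge> 1 - \<delta>" using Emeas L_def by simp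
    show "\<forall>V \<in> E. (MAX k\<in>{..<m}. 1 / vnorm d (V k)) \<le> (real m / \<delta>) powr (1 / real d) / \<alpha>"
      using mne by (auto intro!: inv Enorm)
    show "\<forall>V \<in> E. \<forall>t\<ge>0. (MAX k\<in>{..<m}. 1 / vnorm d (traj V t k)) \<le> (real m / \<delta>) powr (1 / real d) / \<alpha>"
    proof (intro ballI allI impI)
      fix V t assume "V \<in> E" "(t::real) \<ge> 0"
      then have "k < m \<Longrightarrow> r \<le> vnorm d (traj V t k)" for k
        using traj_norm[of t k V] traj_init[of V k] Enorm[of V k] by simp
      then show "(MAX k\<in>{..<m}. 1 / vnorm d (traj V t k)) \<le> (real m / \<delta>) powr (1 / real d) / \<alpha>"
        using mne by (auto intro!: inv)
    qed
  qed
qed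

end
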